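(* Let $\mathcal F_K^{\mathrm d}$ be the set of $F\in\mathcal F_K$ whose columns are mutually different, and let $\mathcal Q_K^{\mathrm{ua}}$ be the set of $Q\in\mathcal Q_K$ such that every column of $Q$ equals $e_k$ for some $k\in\{1,\dots,K\}$, and for every $k$ there is a column $i$ with $Q_{\star i}=e_k$. Then $\mathcal M'''=\bigcup_{K=1}^\infty\mathcal F_K^{\mathrm d}\times\mathcal Q_K^{\mathrm{ua}}=\bigcup_{K=1}^N\mathcal F_K^{\mathrm d}\times\mathcal Q_K^{\mathrm{ua}}$ and $\mathcal M'''$ is identifiable.
   Context: Fix positive integers $M$ and $N$. For a positive integer $K$, $\mathcal F_K$ is the set of real $M\times K$ matrices with all entries in $[0,1]$, and $\mathcal Q_K$ is the set of real $K\times N$ matrices with entries in $[0,1]$ each of whose columns sums to $1$. $e_k$ is the $k$-th standard basis vector of $\mathbb R^K$ and $A_{\star j}$ the $j$-th column of $A$. $(F^1,Q^1)\sim(F^2,Q^2)$ means $F^1,F^2$ have the same number $K$ of columns and there is a permutation $\pi$ of $\{1,\dots,K\}$ with $F^2_{sk}=F^1_{s\pi(k)}$ and $Q^2_{ki}=Q^1_{\pi(k)i}$ for all $s,k,i$. A set $\mathcal M$ of pairs is identifiable if for all $(F^1,Q^1),(F^2,Q^2)\in\mathcal M$, $F^1Q^1=F^2Q^2$ implies $(F^1,Q^1)\sim(F^2,Q^2)$. *)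

theory Defs
  imports "Jordan_Normal_Form.Matrix"
begin

text \<open>Matrices are Jordan_Normal_Form matrices; indices are 0-based
  (row s < M, column k < K, column i < N).\<close>

definition F_set :: "nat \<Rightarrow> nat \<Rightarrow> real mat set" where
  "F_set M K = {F \<in> carrier_mat M K. \<forall>s<M. \<forall>k<K. 0 \<le> F $$ (s,k) \<and> F $$ (s,k) \<le> 1}"

definition Q_set :: "nat \<Rightarrow> nat \<Rightarrow> real mat set" where
  "Q_set K N = {Q \<in> carrier_mat K N. (\<forall>k<K. \<forall>i<N. 0 \<le> Q $$ (k,i) \<and> Q $$ (k,i) \<le> 1)
      \<and> (\<forall>i<N. (\<Sum>k<K. Q $$ (k,i)) = 1)}"

definition F_d_set :: "nat \<Rightarrow> nat \<Rightarrow> real mat set" where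
  "F_d_set M K = {F \<in> F_set M K. \<forall>k<K. \<forall>k'<K. k \<noteq> k' \<longrightarrow> col F k \<noteq> col F k'}"

definition Q_ua_set :: "nat \<Rightarrow> nat \<Rightarrow> real mat set" where
  "Q_ua_set K N = {Q \<in> Q_set K N. (\<forall>i<N. \<exists>k<K. col Q i = unit_vec K k)
      \<and> (\<forall>k<K. \<exists>i<N. col Q i = unit_vec K k)}"

definition pair_equiv :: "nat \<Rightarrow> nat \<Rightarrow> real mat \<times> real mat \<Rightarrow> real mat \<times> real mat \<Rightarrow> bool" where
  "pair_equiv M N p1 p2 = (case p1 of (F1, Q1) \<Rightarrow> case p2 of (F2, Q2) \<Rightarrow>
      dim_col F1 = dim_col F2 \<and>
      (\<exists>\<pi>. \<pi> permutes {..<dim_col F1} \<and>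
         (\<forall>s<M. \<forall>k<dim_col F1. F2 $$ (s,k) = F1 $$ (s, \<pi> k)) \<and>
         (\<forall>k<dim_col F1. \<forall>i<N. Q2 $$ (k,i) = Q1 $$ (\<pi> k, i))))"

definition identifiable :: "nat \<Rightarrow> nat \<Rightarrow> (real mat \<times> real mat) set \<Rightarrow> bool" where
  "identifiable M N S = (\<forall>p1\<in>S. \<forall>p2\<in>S.
      fst p1 * snd p1 = fst p2 * snd p2 \<longrightarrow> pair_equiv M N p1 p2)"

end

theory Submission
  imports Defs "HOL-Combinatorics.Permutations"
begin

lemma mult_unit_col:
  assumes A: "(A :: real mat) \<in> carrier_mat m n" and k: "k < n"
  shows "A *\<^sub>v unit_vec n k = col A k"
  by (rule eq_vecI) (use A k in auto)

lemma Qua_choice: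
  assumes "Q \<in> Q_ua_set K N"
  obtains c d where "\<And>i. i < N \<Longrightarrow> c i < K \<and> col Q i = unit_vec K (c i)"
    "\<And>k. k < K \<Longrightarrow> d k < N \<and> c (d k) = k" "Q \<in> carrier_mat K N"
proof -
  from assms have h1: "\<forall>i<N. \<exists>k<K. col Q i = unit_vec K k"
    and h2: "\<forall>k<K. \<exists>i<N. col Q i = unit_vec K k" and QC: "Q \<in> carrier_mat K N"
    unfolding Q_ua_set_def Q_set_def by auto
  from h1 obtain c where c: "\<And>i. i < N \<Longrightarrow> c i < K \<and> col Q i = unit_vec K (c i)" by metis
  from h2 obtain d where d: "\<And>k. k < K \<Longrightarrow> d k < N \<and> col Q (d k) = unit_vec K k" by metis
  have "\<And>k. k < K \<Longrightarrow> d k < N \<and> c (d k) = k"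
  proof -
    fix k assume k: "k < K"
    then have "d k < N" "unit_vec K (c (d k)) = (unit_vec K k :: real vec)" "c (d k) < K"
      using c d by metis+
    then show "d k < N \<and> c (d k) = k" using unit_vec_eq by metis
  qed
  then show ?thesis using that c QC by blast
qed

lemma card_bound:
  assumes "Q \<in> Q_ua_set K N" shows "K \<le> N"
proof -
  obtain c d where c: "\<And>i. i < N \<Longrightarrow> c i < K \<and> col Q i = unit_vec K (c i)"
    and d: "\<And>k. k < K \<Longrightarrow> d k < N \<and> c (d k) = k"
    using Qua_choice[OF assms] by metis
  have "inj_on d {..<K}" by (rule inj_on_inverseI[of _ c]) (use d in auto)
  moreover have "d ` {..<K} \<subseteq> {..<N}" using d by auto
  ultimately show ?thesis using card_inj_on_le[of d "{..<K}" "{..<N}"] by auto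
qed

lemma ident_core:
  assumes F1: "F1 \<in> F_d_set M K1" and Q1: "Q1 \<in> Q_ua_set K1 N"
    and F2: "F2 \<in> F_d_set M K2" and Q2: "Q2 \<in> Q_ua_set K2 N"
    and eq: "F1 * Q1 = F2 * Q2"
  shows "pair_equiv M N (F1, Q1) (F2, Q2)"
proof -
  obtain c1 d1 where c1: "\<And>i. i < N \<Longrightarrow> c1 i < K1 \<and> col Q1 i = unit_vec K1 (c1 i)"
    and d1: "\<And>k. k < K1 \<Longrightarrow> d1 k < N \<and> c1 (d1 k) = k" and Q1C: "Q1 \<in> carrier_mat K1 N"
    using Qua_choice[OF Q1] by metis
  obtain c2 d2 where c2: "\<And>i. i < N \<Longrightarrow> c2 i < K2 \<and> col Q2 i = unit_vec K2 (c2 i)"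
    and d2: "\<And>k. k < K2 \<Longrightarrow> d2 k < N \<and> c2 (d2 k) = k" and Q2C: "Q2 \<in> carrier_mat K2 N"
    using Qua_choice[OF Q2] by metis
  have F1C: "F1 \<in> carrier_mat M K1" and dF1: "\<And>k k'. k < K1 \<Longrightarrow> k' < K1 \<Longrightarrow> col F1 k = col F1 k' \<Longrightarrow> k = k'"
    using F1 unfolding F_d_set_def F_set_def by auto
  have F2C: "F2 \<in> carrier_mat M K2" and dF2: "\<And>k k'. k < K2 \<Longrightarrow> k' < K2 \<Longrightarrow> col F2 k = col F2 k' \<Longrightarrow> k = k'"
    using F2 unfolding F_d_set_def F_set_def by auto
  have colq: "col F1 (c1 i) = col F2 (c2 i)" if i: "i < N" for i
  proof -
    have "col (F1 * Q1) i = col (F2 * Q2) i" using eq by simp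
    moreover have "col (F1 * Q1) i = col F1 (c1 i)"
      using col_mult2[OF F1C Q1C i] c1[OF i] mult_unit_col[OF F1C] by simp
    moreover have "col (F2 * Q2) i = col F2 (c2 i)"
      using col_mult2[OF F2C Q2C i] c2[OF i] mult_unit_col[OF F2C] by simp
    ultimately show ?thesis by simp
  qed
  define \<pi> where "\<pi> k = (if k < K2 then c1 (d2 k) else k)" for k
  have pc: "\<pi> (c2 i) = c1 i" if i: "i < N" for i
  proof -
    have a: "c2 i < K2" using c2 i by blast
    have b: "d2 (c2 i) < N" "c2 (d2 (c2 i)) = c2 i" using d2[OF a] by auto
    have "col F1 (c1 (d2 (c2 i))) = col F1 (c1 i)" using colq[OF b(1)] colq[OF i] b(2) by simp
    then have "c1 (d2 (c2 i)) = c1 i" using dF1 c1 b(1) i by blast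
    then show ?thesis using a unfolding \<pi>_def by simp
  qed
  have inj: "inj_on \<pi> {..<K2}"
  proof (rule inj_onI)
    fix k k' assume k: "k \<in> {..<K2}" and k': "k' \<in> {..<K2}" and e: "\<pi> k = \<pi> k'"
    have "col F2 k = col F2 (c2 (d2 k))" using d2 k by simp
    also have "\<dots> = col F1 (c1 (d2 k))" using colq d2 k by simp
    also have "\<dots> = col F1 (c1 (d2 k'))" using e k k' unfolding \<pi>_def by simp
    also have "\<dots> = col F2 (c2 (d2 k'))" using colq d2 k' by simp
    also have "\<dots> = col F2 k'" using d2 k' by simp
    finally show "k = k'" using dF2 k k' by blast
  qed
  have img: "\<pi> ` {..<K2} = {..<K1}"
  proof
    show "\<pi> ` {..<K2} \<subseteq> {..<K1}" using c1 d2 unfolding \<pi>_def by auto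
    show "{..<K1} \<subseteq> \<pi> ` {..<K2}"
    proof
      fix k assume k: "k \<in> {..<K1}"
      then have "d1 k < N" "c1 (d1 k) = k" using d1 by auto
      then have "\<pi> (c2 (d1 k)) = k" "c2 (d1 k) < K2" using pc c2 by auto
      then show "k \<in> \<pi> ` {..<K2}" by force
    qed
  qed
  have KK: "K1 = K2" using card_image[OF inj] img by simp
  have perm: "\<pi> permutes {..<K1}"
    by (rule bij_imp_permutes) (use inj img KK in \<open>auto simp: bij_betw_def \<pi>_def\<close>)
  have Fpart: "\<forall>s<M. \<forall>k<dim_col F1. F2 $$ (s,k) = F1 $$ (s, \<pi> k)"
  proof (intro allI impI)
    fix s k assume s: "s < M" and k: "k < dim_col F1"
    then have k2: "k < K2" using F1C KK by simp
    have pk: "\<pi> k < K1" using img k2 by auto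
    have "col F2 k = col F2 (c2 (d2 k))" using d2 k2 by simp
    also have "\<dots> = col F1 (c1 (d2 k))" using colq d2 k2 by simp
    also have "\<dots> = col F1 (\<pi> k)" using k2 unfolding \<pi>_def by simp
    finally have "col F2 k $ s = col F1 (\<pi> k) $ s" by simp
    then show "F2 $$ (s,k) = F1 $$ (s, \<pi> k)" using s k2 pk F1C F2C by simp
  qed
  have Qpart: "\<forall>k<dim_col F1. \<forall>i<N. Q2 $$ (k,i) = Q1 $$ (\<pi> k, i)"
  proof (intro allI impI)
    fix k i assume k: "k < dim_col F1" and i: "i < N"
    then have k2: "k < K2" using F1C KK by simp
    have pk: "\<pi> k < K1" using img k2 by auto
    have "Q2 $$ (k,i) = col Q2 i $ k" using Q2C k2 i by simp
    also have "\<dots> = (if k = c2 i then 1 else 0)" using c2[OF i] k2 by simp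
    also have "\<dots> = (if \<pi> k = c1 i then 1 else 0)"
      using inj k2 c2[OF i] pc[OF i] unfolding inj_on_def by force
    also have "\<dots> = col Q1 i $ \<pi> k" using c1[OF i] pk by simp
    also have "\<dots> = Q1 $$ (\<pi> k, i)" using Q1C pk i by simp
    finally show "Q2 $$ (k,i) = Q1 $$ (\<pi> k, i)" .
  qed
  show ?thesis unfolding pair_equiv_def using F1C F2C KK perm Fpart Qpart by auto
qed

theorem mainTheorem7:
  fixes M N :: nat
  assumes "0 < M" and "0 < N"
  shows "(\<Union>K\<in>{1..}. F_d_set M K \<times> Q_ua_set K N) = (\<Union>K\<in>{1..N}. F_d_set M K \<times> Q_ua_set K N)
     \<and> identifiable M N (\<Union>K\<in>{1..}. F_d_set M K \<times> Q_ua_set K N)"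
proof
  show "(\<Union>K\<in>{1..}. F_d_set M K \<times> Q_ua_set K N) = (\<Union>K\<in>{1..N}. F_d_set M K \<times> Q_ua_set K N)"
    using card_bound by fastforce
  show "identifiable M N (\<Union>K\<in>{1..}. F_d_set M K \<times> Q_ua_set K N)"
    unfolding identifiable_def using ident_core by fastforce
qed

end
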